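(* For every fixed integer $d\ge 3$, as $h\to\infty$, $$\log_{d-1} |G(d,h)| \sim c_d\,(d-1)^h,\qquad\text{where}\quad c_d := d(d-2)\sum_{n=0}^{\infty}(d-1)^{-2-n}\log_{d-1}\frac{(d-1)^{n+2}-1}{d-2}.$$
   Context: Let $\mathcal{T}(d,h)$ be the rooted tree in which the root $0$ has $d$ children, every vertex at distance $1,\dots,h-1$ from the root has $d-1$ children, and the vertices at distance $h$ are leaves. Let $V$ be its vertex set, $A$ its adjacency matrix, $\Delta := dI-A$, and $\Lambda\subset\mathbb{Z}^V$ the lattice spanned by the rows of $\Delta$. Then $G(d,h):=\mathbb{Z}^V/\Lambda$ and $|G(d,h)|$ is its order. $f(h)\sim g(h)$ means $f(h)/g(h)\to1$. *)

theory Defs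
  imports "HOL-Analysis.Analysis" "HOL-Library.Landau_Symbols"
begin

text \<open>Vertices of the tree T(d,h) are encoded as paths from the root: the root is the
empty list; a vertex at depth k is a list of length k whose first entry is < d
(choice among the d children of the root) and whose later entries are < d - 1.\<close>

definition tree_vertices :: "nat \<Rightarrow> nat \<Rightarrow> nat list set" where
  "tree_vertices d h = {xs. length xs \<le> h \<and>
      (\<forall>i<length xs. if i = 0 then xs ! i < d else xs ! i < d - 1)}"

definition tree_adj :: "nat list \<Rightarrow> nat list \<Rightarrow> bool" where
  "tree_adj u v \<longleftrightarrow> (\<exists>c. v = u @ [c]) \<or> (\<exists>c. u = v @ [c])"

definition tree_Delta :: "nat \<Rightarrow> nat list \<Rightarrow> nat list \<Rightarrow> int" where
  "tree_Delta d u v = (if u = v then int d else 0) - (if tree_adj u v then 1 else 0)"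

definition ZV :: "nat \<Rightarrow> nat \<Rightarrow> (nat list \<Rightarrow> int) set" where
  "ZV d h = {x. \<forall>v. v \<notin> tree_vertices d h \<longrightarrow> x v = 0}"

definition tree_lattice :: "nat \<Rightarrow> nat \<Rightarrow> (nat list \<Rightarrow> int) set" where
  "tree_lattice d h = {x. \<exists>c :: nat list \<Rightarrow> int. x = (\<lambda>v. if v \<in> tree_vertices d h
      then (\<Sum>u\<in>tree_vertices d h. c u * tree_Delta d u v) else 0)}"

definition sandpile_group :: "nat \<Rightarrow> nat \<Rightarrow> (nat list \<Rightarrow> int) set set" where
  "sandpile_group d h = ZV d h // {(x, y). x \<in> ZV d h \<and> y \<in> ZV d h \<and> x - y \<in> tree_lattice d h}"

definition c_const :: "nat \<Rightarrow> real" where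
  "c_const d = real d * (real d - 2) *
     (\<Sum>n. (real d - 1) powr (- 2 - real n) *
           log (real d - 1) (((real d - 1) ^ (n + 2) - 1) / (real d - 2)))"

end

theory Submission
  imports Defs "Jordan_Normal_Form.Determinant" "HOL-Library.List_Lexorder" "HOL-Real_Asymp.Real_Asymp"
begin

definition Zn :: "nat \<Rightarrow> (nat \<Rightarrow> int) set" where
  "Zn n = {x. \<forall>j. n \<le> j \<longrightarrow> x j = 0}"

definition latn :: "nat \<Rightarrow> int mat \<Rightarrow> (nat \<Rightarrow> int) set" where
  "latn n A = {x. \<exists>c. x = (\<lambda>j. if j < n then (\<Sum>i<n. c i * A $$ (i,j)) else 0)}"

lemma latn_Zn: "x \<in> latn n A \<Longrightarrow> x \<in> Zn n"
  unfolding latn_def Zn_def by auto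

lemma latn_zero: "(\<lambda>_. 0) \<in> latn n A"
  unfolding latn_def mem_Collect_eq mem_Collect_eq by (rule exI[of _ "\<lambda>_. 0"]) auto

lemma latn_add: assumes "x \<in> latn n A" "y \<in> latn n A" shows "(\<lambda>j. x j + y j) \<in> latn n A"
proof -
  from assms obtain c e where c: "x = (\<lambda>j. if j < n then (\<Sum>i<n. c i * A $$ (i,j)) else 0)"
    and e: "y = (\<lambda>j. if j < n then (\<Sum>i<n. e i * A $$ (i,j)) else 0)" unfolding latn_def mem_Collect_eq by auto
  show ?thesis unfolding latn_def mem_Collect_eq
    by (rule exI[of _ "\<lambda>i. c i + e i"]) (auto simp: c e distrib_right sum.distrib)
qed

lemma latn_smult: assumes "x \<in> latn n A" shows "(\<lambda>j. a * x j) \<in> latn n A"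
proof -
  from assms obtain c where c: "x = (\<lambda>j. if j < n then (\<Sum>i<n. c i * A $$ (i,j)) else 0)"
    unfolding latn_def mem_Collect_eq by auto
  show ?thesis unfolding latn_def mem_Collect_eq
    by (rule exI[of _ "\<lambda>i. a * c i"]) (auto simp: c sum_distrib_left mult.assoc)
qed

lemma latn_diff: assumes "x \<in> latn n A" "y \<in> latn n A" shows "x - y \<in> latn n A"
  using latn_add[OF assms(1) latn_smult[OF assms(2), of "-1"]] by (simp add: fun_diff_def)

lemma sum_delta_mult: fixes n :: nat assumes "m < n" shows "(\<Sum>k<n. (if k = m then 1 else 0) * (f k :: int)) = f m"
proof -
  have e: "(\<lambda>k. (if k = m then 1 else 0) * f k) = (\<lambda>k. if k = m then f k else 0)" by auto
  show ?thesis unfolding e using assms by (subst sum.delta) auto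
qed

lemma latn_row: assumes "m < n" shows "(\<lambda>j. if j < n then A $$ (m,j) else 0) \<in> latn n A"
  unfolding latn_def mem_Collect_eq
proof (rule exI[of _ "\<lambda>i. if i = m then 1 else 0"], rule ext)
  fix j show "(if j < n then A $$ (m, j) else 0) =
    (if j < n then \<Sum>i<n. (if i = m then 1 else 0) * A $$ (i, j) else 0)"
    using assms by (simp add: sum_delta_mult)
qed

definition rows_comb :: "nat \<Rightarrow> int mat \<Rightarrow> int mat \<Rightarrow> bool" where
  "rows_comb n A B \<longleftrightarrow> (\<forall>i<n. \<exists>w. \<forall>j<n. B $$ (i,j) = (\<Sum>k<n. w k * A $$ (k,j)))"

lemma rows_comb_latn: assumes "rows_comb n A B" shows "latn n B \<subseteq> latn n A"
proof
  from assms obtain W where W: "\<And>i j. i < n \<Longrightarrow> j < n \<Longrightarrow> B $$ (i,j) = (\<Sum>k<n. W i k * A $$ (k,j))"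
    unfolding rows_comb_def by metis
  fix x assume "x \<in> latn n B"
  then obtain c where c: "x = (\<lambda>j. if j < n then (\<Sum>i<n. c i * B $$ (i,j)) else 0)"
    unfolding latn_def mem_Collect_eq by auto
  show "x \<in> latn n A" unfolding latn_def mem_Collect_eq
  proof (rule exI[of _ "\<lambda>k. \<Sum>i<n. c i * W i k"], rule ext)
    fix j
    show "x j = (if j < n then \<Sum>k<n. (\<Sum>i<n. c i * W i k) * A $$ (k, j) else 0)"
    proof (cases "j < n")
      case True
      have "x j = (\<Sum>i<n. c i * (\<Sum>k<n. W i k * A $$ (k,j)))" using True c W by simp
      also have "\<dots> = (\<Sum>i<n. \<Sum>k<n. c i * W i k * A $$ (k,j))"
        by (simp add: sum_distrib_left mult.assoc)
      also have "\<dots> = (\<Sum>k<n. \<Sum>i<n. c i * W i k * A $$ (k,j))" by (rule sum.swap)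
      also have "\<dots> = (\<Sum>k<n. (\<Sum>i<n. c i * W i k) * A $$ (k,j))"
        by (simp add: sum_distrib_right)
      finally show ?thesis using True by simp
    qed (simp add: c)
  qed
qed

lemma rows_comb_addrow: assumes A: "A \<in> carrier_mat n n" and l: "l < n" and kl: "k \<noteq> l"
  shows "rows_comb n A (addrow a k l A)"
  unfolding rows_comb_def
proof (intro allI impI)
  fix i assume i: "i < n"
  show "\<exists>w. \<forall>j<n. addrow a k l A $$ (i, j) = (\<Sum>k<n. w k * A $$ (k, j))"
  proof (cases "i = k")
    case True
    show ?thesis
    proof (rule exI[of _ "\<lambda>m. (if m = k then 1 else 0) + a * (if m = l then 1 else 0)"], intro allI impI)
      fix j assume j: "j < n"
      have "(\<Sum>m<n. ((if m = k then 1 else 0) + a * (if m = l then 1 else 0)) * A $$ (m, j))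
         = (\<Sum>m<n. (if m = k then 1 else 0) * A $$ (m, j)) + a * (\<Sum>m<n. (if m = l then 1 else 0) * A $$ (m, j))"
        by (simp add: distrib_right sum.distrib sum_distrib_left mult.assoc)
      also have "\<dots> = A $$ (k,j) + a * A $$ (l,j)" using i True l by (simp add: sum_delta_mult)
      finally show "addrow a k l A $$ (i, j) = (\<Sum>m<n. ((if m = k then 1 else 0) + a * (if m = l then 1 else 0)) * A $$ (m, j))"
        using A i j True by simp
    qed
  next
    case False
    show ?thesis
      by (rule exI[of _ "\<lambda>m. (if m = i then 1 else 0)"]) (use A i False in \<open>simp add: sum_delta_mult\<close>)
  qed
qed

lemma addrow_inv: fixes A :: "int mat" assumes A: "A \<in> carrier_mat n n" and kl: "k \<noteq> l" and l: "l < n"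
  shows "addrow (-a) k l (addrow a k l A) = A"
  using A kl l by (intro eq_matI) (auto simp: algebra_simps)

lemma latn_addrow: assumes A: "A \<in> carrier_mat n n" and l: "l < n" and kl: "k \<noteq> l"
  shows "latn n (addrow a k l A) = latn n A"
proof
  show "latn n (addrow a k l A) \<subseteq> latn n A" by (rule rows_comb_latn[OF rows_comb_addrow[OF A l kl]])
  have A': "addrow a k l A \<in> carrier_mat n n" using A by auto
  have "latn n (addrow (-a) k l (addrow a k l A)) \<subseteq> latn n (addrow a k l A)"
    by (rule rows_comb_latn[OF rows_comb_addrow[OF A' l kl]])
  then show "latn n A \<subseteq> latn n (addrow a k l A)" using addrow_inv[OF A kl l] by simp
qed

lemma rows_comb_swaprows: assumes A: "A \<in> carrier_mat n n" and k: "k < n" and l: "l < n"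
  shows "rows_comb n A (swaprows k l A)"
  unfolding rows_comb_def
proof (intro allI impI)
  fix i assume i: "i < n"
  let ?m = "if i = k then l else if i = l then k else i"
  have m: "?m < n" using i k l by auto
  show "\<exists>w. \<forall>j<n. swaprows k l A $$ (i, j) = (\<Sum>k<n. w k * A $$ (k, j))"
    by (rule exI[of _ "\<lambda>r. (if r = ?m then 1 else 0)"]) (use A i m in \<open>auto simp add: sum_delta_mult\<close>)
qed

lemma swaprows_inv: assumes A: "A \<in> carrier_mat n n" and k: "k < n" and l: "l < n"
  shows "swaprows k l (swaprows k l A) = A"
  using A k l by (intro eq_matI) auto

lemma latn_swaprows: assumes A: "A \<in> carrier_mat n n" and k: "k < n" and l: "l < n"
  shows "latn n (swaprows k l A) = latn n A"
proof
  show "latn n (swaprows k l A) \<subseteq> latn n A" by (rule rows_comb_latn[OF rows_comb_swaprows[OF A k l]])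
  have A': "swaprows k l A \<in> carrier_mat n n" using A by auto
  have "latn n (swaprows k l (swaprows k l A)) \<subseteq> latn n (swaprows k l A)"
    by (rule rows_comb_latn[OF rows_comb_swaprows[OF A' k l]])
  then show "latn n A \<subseteq> latn n (swaprows k l A)" using swaprows_inv[OF A k l] by simp
qed

lemma card_quotient_fun:
  assumes rel: "\<And>x y. (x,y) \<in> r \<longleftrightarrow> x \<in> S \<and> y \<in> S \<and> f x = f y" and R: "f ` S = R"
  shows "card (S // r) = card R"
proof -
  let ?F = "\<lambda>z. {x\<in>S. f x = z}"
  have "S // r = ?F ` R"
  proof -
    have "S // r = (\<Union>x\<in>S. {r``{x}})" by (simp add: quotient_def)
    also have "\<dots> = (\<Union>x\<in>S. {?F (f x)})" using rel by (intro SUP_cong) auto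
    also have "\<dots> = ?F ` (f ` S)" by auto
    finally show ?thesis using R by simp
  qed
  moreover have "inj_on ?F R"
  proof (rule inj_onI)
    fix a b assume "a \<in> R" "b \<in> R" "?F a = ?F b"
    then obtain x where "x \<in> S" "f x = a" using R by auto
    then have "x \<in> ?F a" by simp
    then have "x \<in> ?F b" using \<open>?F a = ?F b\<close> by simp
    then show "a = b" using \<open>f x = a\<close> by simp
  qed
  ultimately show ?thesis by (simp add: card_image)
qed

definition reln :: "nat \<Rightarrow> int mat \<Rightarrow> ((nat \<Rightarrow> int) \<times> (nat \<Rightarrow> int)) set" where
  "reln n A = {(x,y). x \<in> Zn n \<and> y \<in> Zn n \<and> x - y \<in> latn n A}"

definition good_lat :: "nat \<Rightarrow> int mat \<Rightarrow> nat \<Rightarrow> bool" where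
  "good_lat n A NN \<longleftrightarrow> (\<exists>(f :: (nat \<Rightarrow> int) \<Rightarrow> (nat \<Rightarrow> int)). card (f ` Zn n) = NN \<and>
      (\<forall>x\<in>Zn n. \<forall>y\<in>Zn n. x - y \<in> latn n A \<longleftrightarrow> f x = f y))"

lemma good_lat_card: assumes "good_lat n A NN" shows "card (Zn n // reln n A) = NN"
proof -
  obtain f :: "(nat \<Rightarrow> int) \<Rightarrow> (nat \<Rightarrow> int)" where f: "card (f ` Zn n) = NN"
    "\<forall>x\<in>Zn n. \<forall>y\<in>Zn n. x - y \<in> latn n A \<longleftrightarrow> f x = f y"
    using assms unfolding good_lat_def by blast
  have "card (Zn n // reln n A) = card (f ` Zn n)"
    by (rule card_quotient_fun[where f = f]) (use f in \<open>auto simp: reln_def\<close>)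
  then show ?thesis using f by simp
qed

locale tri =
  fixes n :: nat and B :: "int mat"
  assumes B: "B \<in> carrier_mat n n"
    and ut: "\<And>i j. i < n \<Longrightarrow> j < i \<Longrightarrow> B $$ (i,j) = 0"
    and nz: "\<And>i. i < n \<Longrightarrow> B $$ (i,i) \<noteq> 0"
begin

definition R where "R = {x \<in> Zn n. \<forall>i<n. 0 \<le> x i \<and> x i < \<bar>B $$ (i,i)\<bar>}"

lemma reduce: assumes x: "x \<in> Zn n" shows "m \<le> n \<Longrightarrow> \<exists>y\<in>Zn n. x - y \<in> latn n B \<and> (\<forall>i<m. 0 \<le> y i \<and> y i < \<bar>B $$ (i,i)\<bar>)"
proof (induction m)
  case 0
  show ?case by (rule bexI[of _ x]) (use x latn_zero[of n B] in \<open>auto simp: fun_diff_def\<close>)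
next
  case (Suc m)
  have "m \<le> n" using Suc.prems by simp
  then obtain y where y: "y \<in> Zn n" "x - y \<in> latn n B" "\<forall>i<m. 0 \<le> y i \<and> y i < \<bar>B $$ (i,i)\<bar>" using Suc.IH by blast
  have m: "m < n" using Suc by simp
  define b where "b = B $$ (m,m)"
  have b: "b \<noteq> 0" using nz m b_def by simp
  define c where "c = sgn b * (y m div \<bar>b\<bar>)"
  define rw where "rw = (\<lambda>j. if j < n then B $$ (m,j) else 0)"
  define y' where "y' = (\<lambda>j. y j - c * rw j)"
  have "y' \<in> Zn n" using y(1) unfolding y'_def rw_def Zn_def by auto
  moreover have "x - y' \<in> latn n B"
  proof -
    have "x - y' = (\<lambda>j. (x - y) j + c * rw j)" unfolding y'_def by (auto simp: fun_diff_def)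
    also have "\<dots> \<in> latn n B"
      by (rule latn_add[OF y(2) latn_smult]) (use latn_row[OF m, of B] in \<open>simp add: rw_def\<close>)
    finally show ?thesis .
  qed
  moreover have "\<forall>i<Suc m. 0 \<le> y' i \<and> y' i < \<bar>B $$ (i,i)\<bar>"
  proof (intro allI impI)
    fix i assume i: "i < Suc m"
    show "0 \<le> y' i \<and> y' i < \<bar>B $$ (i,i)\<bar>"
    proof (cases "i < m")
      case True
      then have "rw i = 0" using ut[OF m True] m unfolding rw_def by simp
      then show ?thesis using y(3) True unfolding y'_def by simp
    next
      case False
      then have im: "i = m" using i by simp
      have "y' m = y m - sgn b * b * (y m div \<bar>b\<bar>)" unfolding y'_def rw_def c_def b_def using m
        by (simp add: algebra_simps)
      also have "sgn b * b = \<bar>b\<bar>" by (simp add: sgn_mult_abs abs_sgn mult.commute)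
      also have "y m - \<bar>b\<bar> * (y m div \<bar>b\<bar>) = y m mod \<bar>b\<bar>" by (metis minus_div_mult_eq_mod mult.commute)
      finally have "y' m = y m mod \<bar>b\<bar>" .
      then show ?thesis using b im b_def by simp
    qed
  qed
  ultimately show ?case by blast
qed

lemma unique: assumes x: "x \<in> R" and y: "y \<in> R" and xy: "x - y \<in> latn n B" shows "x = y"
proof -
  obtain c where c: "x - y = (\<lambda>j. if j < n then (\<Sum>i<n. c i * B $$ (i,j)) else 0)"
    using xy unfolding latn_def by auto
  have xr: "\<And>i. i < n \<Longrightarrow> 0 \<le> x i \<and> x i < \<bar>B $$ (i,i)\<bar>" and yr: "\<And>i. i < n \<Longrightarrow> 0 \<le> y i \<and> y i < \<bar>B $$ (i,i)\<bar>"
    using x y unfolding R_def by auto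
  have c0: "i < n \<Longrightarrow> c i = 0" for i
  proof (induction i rule: less_induct)
    case (less i)
    have "(\<Sum>k<n. c k * B $$ (k,i)) = (\<Sum>k<n. if k = i then c i * B $$ (i,i) else 0)"
    proof (rule sum.cong)
      fix k assume k: "k \<in> {..<n}"
      show "c k * B $$ (k,i) = (if k = i then c i * B $$ (i,i) else 0)"
      proof (cases "k < i")
        case True then show ?thesis using less by simp
      next
        case False
        then show ?thesis using ut[of k i] k by (cases "k = i") auto
      qed
    qed simp
    also have "\<dots> = c i * B $$ (i,i)" using less by (subst sum.delta) auto
    finally have "x i - y i = c i * B $$ (i,i)" using fun_cong[OF c, of i] less by (simp add: fun_diff_def)
    moreover have "\<bar>x i - y i\<bar> < \<bar>B $$ (i,i)\<bar>" using xr[OF less(2)] yr[OF less(2)] by linarith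
    ultimately have "\<bar>c i\<bar> * \<bar>B $$ (i,i)\<bar> < 1 * \<bar>B $$ (i,i)\<bar>" by (simp add: abs_mult)
    show "c i = 0"
    proof (rule ccontr)
      assume "c i \<noteq> 0"
      then have "1 \<le> \<bar>c i\<bar>" by simp
      then have "1 * \<bar>B $$ (i,i)\<bar> \<le> \<bar>c i\<bar> * \<bar>B $$ (i,i)\<bar>" by (rule mult_right_mono) simp
      then show False using \<open>\<bar>c i\<bar> * \<bar>B $$ (i,i)\<bar> < 1 * \<bar>B $$ (i,i)\<bar>\<close> by simp
    qed
  qed
  show "x = y"
  proof (rule ext)
    fix j show "x j = y j"
    proof (cases "j < n")
      case True
      have "x j - y j = 0" using fun_cong[OF c, of j] True c0 by (simp add: fun_diff_def)
      then show ?thesis by simp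
    next
      case False then show ?thesis using x y unfolding R_def Zn_def by auto
    qed
  qed
qed

lemma card_R: "card R = (\<Prod>i<n. nat \<bar>B $$ (i,i)\<bar>)"
proof -
  let ?P = "PiE {..<n} (\<lambda>i. {0..<\<bar>B $$ (i,i)\<bar>})"
  have "bij_betw (\<lambda>x. restrict x {..<n}) R ?P"
  proof (rule bij_betw_byWitness[where f' = "\<lambda>f j. if j < n then f j else 0"])
    show "\<forall>a\<in>R. (\<lambda>j. if j < n then restrict a {..<n} j else 0) = a"
      unfolding R_def Zn_def by (auto intro!: ext)
    show "\<forall>a'\<in>?P. restrict (\<lambda>j. if j < n then a' j else 0) {..<n} = a'"
      by (auto simp: PiE_def extensional_def intro!: ext)
    show "(\<lambda>x. restrict x {..<n}) ` R \<subseteq> ?P"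
    proof (rule image_subsetI)
      fix x assume "x \<in> R" then show "restrict x {..<n} \<in> ?P" unfolding R_def by (simp add: PiE_iff)
    qed
    show "(\<lambda>f j. if j < n then f j else 0) ` ?P \<subseteq> R"
    proof (rule image_subsetI)
      fix g assume g: "g \<in> ?P"
      then have "\<forall>i<n. g i \<in> {0..<\<bar>B $$ (i,i)\<bar>}" by (simp add: PiE_iff)
      then show "(\<lambda>j. if j < n then g j else 0) \<in> R" unfolding R_def Zn_def by simp
    qed
  qed
  then have "card R = card ?P" by (rule bij_betw_same_card)
  also have "\<dots> = (\<Prod>i<n. nat \<bar>B $$ (i,i)\<bar>)" by (simp add: card_PiE)
  finally show ?thesis .
qed

lemma good: "good_lat n B (\<Prod>i<n. nat \<bar>B $$ (i,i)\<bar>)"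
proof -
  have ex: "\<exists>y. y \<in> R \<and> x - y \<in> latn n B" if "x \<in> Zn n" for x
    using reduce[OF that, of n] unfolding R_def by auto
  define f where "f x = (SOME y. y \<in> R \<and> x - y \<in> latn n B)" for x
  have f: "f x \<in> R \<and> x - f x \<in> latn n B" if "x \<in> Zn n" for x
    unfolding f_def by (rule someI_ex[OF ex[OF that]])
  have "f ` Zn n = R"
  proof
    show "f ` Zn n \<subseteq> R" using f by auto
    show "R \<subseteq> f ` Zn n"
    proof
      fix r assume r: "r \<in> R"
      then have rz: "r \<in> Zn n" unfolding R_def by auto
      have "r = f r" using unique[OF r _ ] f[OF rz] by auto
      then show "r \<in> f ` Zn n" using rz by blast
    qed
  qed
  moreover have "\<forall>x\<in>Zn n. \<forall>y\<in>Zn n. x - y \<in> latn n B \<longleftrightarrow> f x = f y"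
  proof (intro ballI iffI)
    fix x y assume x: "x \<in> Zn n" and y: "y \<in> Zn n"
    {
      assume "x - y \<in> latn n B"
      have "f x - f y = (x - y) - ((x - f x) - (y - f y))" by (auto simp: fun_diff_def)
      also have "\<dots> \<in> latn n B"
        by (rule latn_diff[OF \<open>x - y \<in> latn n B\<close> latn_diff[OF conjunct2[OF f[OF x]] conjunct2[OF f[OF y]]]])
      finally show "f x = f y" using unique f x y by auto
    }
    {
      assume "f x = f y"
      have "x - y = (x - f x) - (y - f y)" using \<open>f x = f y\<close> by (auto simp: fun_diff_def)
      also have "\<dots> \<in> latn n B" by (rule latn_diff[OF conjunct2[OF f[OF x]] conjunct2[OF f[OF y]]])
      finally show "x - y \<in> latn n B" .
    }
  qed
  ultimately show ?thesis unfolding good_lat_def using card_R by (intro exI[of _ f]) simp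
qed

end

definition inv_lat :: "nat \<Rightarrow> int mat \<Rightarrow> int mat \<Rightarrow> bool" where
  "inv_lat n A B \<longleftrightarrow> B \<in> carrier_mat n n \<and> latn n B = latn n A \<and> \<bar>det B\<bar> = \<bar>det A\<bar>"

definition lowz :: "nat \<Rightarrow> nat \<Rightarrow> int mat \<Rightarrow> bool" where
  "lowz n k B \<longleftrightarrow> (\<forall>i j. i < n \<longrightarrow> j < k \<longrightarrow> j < i \<longrightarrow> B $$ (i,j) = 0)"

lemma inv_addrow: assumes "inv_lat n A B" "s < n" "p \<noteq> s"
  shows "inv_lat n A (addrow a p s B)"
proof -
  have Bc: "B \<in> carrier_mat n n" using assms(1) unfolding inv_lat_def by auto
  show ?thesis using assms latn_addrow[OF Bc assms(2,3)] det_addrow[OF assms(2,3) Bc] unfolding inv_lat_def by auto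
qed

lemma inv_swaprows: assumes "inv_lat n A B" "k < n" "i < n" "k \<noteq> i"
  shows "inv_lat n A (swaprows k i B)"
proof -
  have Bc: "B \<in> carrier_mat n n" using assms(1) unfolding inv_lat_def by auto
  show ?thesis using assms latn_swaprows[OF Bc assms(2,3)] det_swaprows[OF assms(2,3,4) Bc] unfolding inv_lat_def by auto
qed

lemma step_col:
  assumes k: "k < n"
  shows "inv_lat n A B \<Longrightarrow> lowz n k B \<Longrightarrow> \<exists>B'. inv_lat n A B' \<and> lowz n (Suc k) B'"
proof (induction "\<Sum>i\<in>{k..<n}. nat \<bar>B $$ (i,k)\<bar>" arbitrary: B rule: less_induct)
  case (less B)
  have Bc: "B \<in> carrier_mat n n" using less.prems unfolding inv_lat_def by auto
  show ?case
  proof (cases "\<exists>i i'. k \<le> i \<and> i < n \<and> k \<le> i' \<and> i' < n \<and> i \<noteq> i' \<and> B $$ (i,k) \<noteq> 0 \<and> B $$ (i',k) \<noteq> 0")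
    case True
    then obtain p s where ps: "k \<le> p" "p < n" "k \<le> s" "s < n" "p \<noteq> s" "B $$ (p,k) \<noteq> 0" "B $$ (s,k) \<noteq> 0"
      "\<bar>B $$ (s,k)\<bar> \<le> \<bar>B $$ (p,k)\<bar>"
    proof -
      from True obtain i i' where ii: "k \<le> i" "i < n" "k \<le> i'" "i' < n" "i \<noteq> i'" "B $$ (i,k) \<noteq> 0" "B $$ (i',k) \<noteq> 0"
        by blast
      show ?thesis
      proof (cases "\<bar>B $$ (i',k)\<bar> \<le> \<bar>B $$ (i,k)\<bar>")
        case True then show ?thesis using that[of i i'] ii by blast
      next
        case False then show ?thesis using that[of i' i] ii by fastforce
      qed
    qed
    define a where "a = - (B $$ (p,k) div B $$ (s,k))"
    define B' where "B' = addrow a p s B"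
    have inv': "inv_lat n A B'" unfolding B'_def by (rule inv_addrow[OF less.prems(1) ps(4) ps(5)])
    have low': "lowz n k B'" using less.prems(2) Bc ps unfolding lowz_def B'_def by auto
    have Bpk: "B' $$ (p,k) = B $$ (p,k) mod B $$ (s,k)"
      unfolding B'_def a_def using Bc ps k
      by (simp add: minus_div_mult_eq_mod[symmetric] algebra_simps)
    have "\<bar>B' $$ (p,k)\<bar> < \<bar>B $$ (s,k)\<bar>" unfolding Bpk using ps(7) abs_mod_less by blast
    then have lt: "nat \<bar>B' $$ (p,k)\<bar> < nat \<bar>B $$ (p,k)\<bar>" using ps(8) by linarith
    have eq: "i \<noteq> p \<Longrightarrow> i < n \<Longrightarrow> B' $$ (i,k) = B $$ (i,k)" for i
      unfolding B'_def using Bc k by simp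
    have "(\<Sum>i\<in>{k..<n}. nat \<bar>B' $$ (i,k)\<bar>) < (\<Sum>i\<in>{k..<n}. nat \<bar>B $$ (i,k)\<bar>)"
    proof (rule sum_strict_mono_ex1)
      show "\<forall>x\<in>{k..<n}. nat \<bar>B' $$ (x, k)\<bar> \<le> nat \<bar>B $$ (x, k)\<bar>"
        using eq lt by (metis atLeastLessThan_iff order.refl less_imp_le)
      show "\<exists>a\<in>{k..<n}. nat \<bar>B' $$ (a, k)\<bar> < nat \<bar>B $$ (a, k)\<bar>"
        using lt ps by auto
    qed simp
    then show ?thesis using less.hyps inv' low' by blast
  next
    case False
    show ?thesis
    proof (cases "\<exists>i. k < i \<and> i < n \<and> B $$ (i,k) \<noteq> 0")
      case True
      then obtain i where i: "k < i" "i < n" "B $$ (i,k) \<noteq> 0" by blast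
      have z: "r \<noteq> i \<Longrightarrow> k \<le> r \<Longrightarrow> r < n \<Longrightarrow> B $$ (r,k) = 0" for r
        using False i by (metis less_imp_le)
      define B' where "B' = swaprows k i B"
      have inv': "inv_lat n A B'" unfolding B'_def by (rule inv_swaprows[OF less.prems(1) k i(2)]) (use i in simp)
      have "lowz n (Suc k) B'" unfolding lowz_def
      proof (intro allI impI)
        fix r j assume r: "r < n" and j: "j < Suc k" and jr: "j < r"
        show "B' $$ (r,j) = 0"
        proof (cases "r = k")
          case True
          then show ?thesis unfolding B'_def using Bc r j jr i less.prems(2) unfolding lowz_def by auto
        next
          case rk: False
          show ?thesis
          proof (cases "r = i")
            case True
            then show ?thesis unfolding B'_def using Bc r j jr i less.prems(2) z[of k] k unfolding lowz_def
              by (cases "j = k") auto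
          next
            case False
            then show ?thesis unfolding B'_def using Bc r j jr i less.prems(2) z[of r] rk unfolding lowz_def
              by (cases "j = k") auto
          qed
        qed
      qed
      then show ?thesis using inv' by blast
    next
      case False
      then have "lowz n (Suc k) B" using less.prems(2) unfolding lowz_def
        by (metis less_SucE)
      then show ?thesis using less.prems(1) by blast
    qed
  qed
qed

lemma triangularize: assumes A: "A \<in> carrier_mat n n"
  shows "k \<le> n \<Longrightarrow> \<exists>B. inv_lat n A B \<and> lowz n k B"
proof (induction k)
  case 0
  show ?case by (rule exI[of _ A]) (use A in \<open>auto simp: inv_lat_def lowz_def\<close>)
next
  case (Suc k)
  then obtain B where "inv_lat n A B" "lowz n k B" by auto
  then show ?case using step_col[of k n A B] Suc.prems by auto
qed

lemma good_lat_cong: "latn n A = latn n B \<Longrightarrow> good_lat n A N = good_lat n B N"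
  unfolding good_lat_def by simp

lemma nat_prod_abs: "nat \<bar>\<Prod>i\<in>S. (f i :: int)\<bar> = (\<Prod>i\<in>S. nat \<bar>f i\<bar>)"
proof -
  have "int (\<Prod>i\<in>S. nat \<bar>f i\<bar>) = \<bar>\<Prod>i\<in>S. f i\<bar>" by (simp add: of_nat_prod abs_prod)
  then show ?thesis by (metis nat_int)
qed

theorem lattice_index:
  assumes A: "A \<in> carrier_mat n n" and d: "det A \<noteq> 0"
  shows "card (Zn n // reln n A) = nat \<bar>det A\<bar>"
proof -
  obtain B where Bi: "inv_lat n A B" "lowz n n B" using triangularize[OF A, of n] by auto
  have Bc: "B \<in> carrier_mat n n" using Bi unfolding inv_lat_def by auto
  have ut: "upper_triangular B" using Bi Bc unfolding lowz_def upper_triangular_def by auto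
  have "det B = prod_list (diag_mat B)" by (rule det_upper_triangular[OF ut Bc])
  also have "\<dots> = (\<Prod>i<n. B $$ (i,i))" using Bc
    by (simp add: diag_mat_def prod.distinct_set_conv_list[symmetric] atLeast0LessThan)
  finally have detB: "det B = (\<Prod>i<n. B $$ (i,i))" .
  have dB: "det B \<noteq> 0" using Bi d unfolding inv_lat_def by auto
  have nz: "i < n \<Longrightarrow> B $$ (i,i) \<noteq> 0" for i using dB unfolding detB by auto
  interpret tri n B by unfold_locales (use Bc Bi(2) nz in \<open>auto simp: lowz_def\<close>)
  have "good_lat n B (nat \<bar>det B\<bar>)" using good unfolding detB nat_prod_abs .
  moreover have e: "latn n B = latn n A" "\<bar>det B\<bar> = \<bar>det A\<bar>" using Bi(1) unfolding inv_lat_def by auto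
  ultimately have "good_lat n A (nat \<bar>det A\<bar>)" unfolding e(2) using good_lat_cong[OF e(1)] by simp
  then show ?thesis by (rule good_lat_card)
qed

definition ZVg :: "'a set \<Rightarrow> ('a \<Rightarrow> int) set" where
  "ZVg V = {x. \<forall>v. v \<notin> V \<longrightarrow> x v = 0}"

definition latV :: "'a set \<Rightarrow> ('a \<Rightarrow> 'a \<Rightarrow> int) \<Rightarrow> ('a \<Rightarrow> int) set" where
  "latV V M = {x. \<exists>c :: 'a \<Rightarrow> int. x = (\<lambda>v. if v \<in> V
      then (\<Sum>u\<in>V. c u * M u v) else 0)}"

lemma equiv_reln: "equiv (Zn n) (reln n A)"
proof (rule equivI)
  show "reln n A \<subseteq> Zn n \<times> Zn n" unfolding reln_def by auto
  show "refl_on (Zn n) (reln n A)"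
    unfolding refl_on_def reln_def using latn_zero[of n A] by (auto simp: fun_diff_def)
  show "sym (reln n A)"
  proof (rule symI)
    fix x y assume "(x,y) \<in> reln n A"
    then have "x \<in> Zn n" "y \<in> Zn n" "x - y \<in> latn n A" unfolding reln_def by auto
    moreover have "y - x = (\<lambda>j. (-1) * (x - y) j)" by (auto simp: fun_diff_def)
    ultimately show "(y,x) \<in> reln n A" unfolding reln_def using latn_smult[of "x - y" n A "-1"] by auto
  qed
  show "trans (reln n A)"
  proof (rule transI)
    fix x y z assume "(x,y) \<in> reln n A" "(y,z) \<in> reln n A"
    then have "x \<in> Zn n" "z \<in> Zn n" "x - y \<in> latn n A" "y - z \<in> latn n A" unfolding reln_def by auto
    moreover have "x - z = (\<lambda>j. (x - y) j + (y - z) j)" by (auto simp: fun_diff_def)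
    ultimately show "(x,z) \<in> reln n A" unfolding reln_def using latn_add[of "x - y" n A "y - z"] by auto
  qed
qed

lemma transfer_card:
  fixes \<phi> :: "nat \<Rightarrow> 'a" and M :: "'a \<Rightarrow> 'a \<Rightarrow> int"
  assumes bij: "bij_betw \<phi> {..<n} V"
  shows "card (ZVg V // {(x, y). x \<in> ZVg V \<and> y \<in> ZVg V \<and> x - y \<in> latV V M})
       = card (Zn n // reln n (mat n n (\<lambda>(i,j). M (\<phi> i) (\<phi> j))))"
proof -
  define A where "A = mat n n (\<lambda>(i,j). M (\<phi> i) (\<phi> j))"
  define T where "T x = (\<lambda>j. if j < n then x (\<phi> j) else 0)" for x :: "'a \<Rightarrow> int"
  define \<psi> where "\<psi> = inv_into {..<n} \<phi>"
  have \<psi>: "v \<in> V \<Longrightarrow> \<psi> v < n \<and> \<phi> (\<psi> v) = v" for v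
    using bij unfolding \<psi>_def by (metis bij_betw_imp_surj_on inv_into_into lessThan_iff f_inv_into_f)
  have \<phi>: "i < n \<Longrightarrow> \<phi> i \<in> V \<and> \<psi> (\<phi> i) = i" for i
    using bij unfolding \<psi>_def by (meson bij_betwE bij_betw_imp_inj_on inv_into_f_f lessThan_iff)
  have TZ: "T x \<in> Zn n" for x unfolding T_def Zn_def by auto
  have Tdiff: "T (x - y) = T x - T y" for x y unfolding T_def by (auto simp: fun_diff_def)
  have sumre: "(\<Sum>u\<in>V. g u) = (\<Sum>i<n. g (\<phi> i))" for g :: "'a \<Rightarrow> int"
    using sum.reindex_bij_betw[OF bij, of g] by simp
  have lat: "z \<in> latV V M \<longleftrightarrow> T z \<in> latn n A" if z: "z \<in> ZVg V" for z
  proof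
    assume "z \<in> latV V M"
    then obtain c where c: "z = (\<lambda>v. if v \<in> V then (\<Sum>u\<in>V. c u * M u v) else 0)"
      unfolding latV_def by auto
    show "T z \<in> latn n A" unfolding latn_def mem_Collect_eq
    proof (rule exI[of _ "\<lambda>i. c (\<phi> i)"], rule ext)
      fix j show "T z j = (if j < n then \<Sum>i<n. c (\<phi> i) * A $$ (i, j) else 0)"
        unfolding T_def c A_def using \<phi> by (auto simp: sumre)
    qed
  next
    assume "T z \<in> latn n A"
    then obtain c where c: "T z = (\<lambda>j. if j < n then (\<Sum>i<n. c i * A $$ (i,j)) else 0)"
      unfolding latn_def by auto
    show "z \<in> latV V M" unfolding latV_def mem_Collect_eq
    proof (rule exI[of _ "\<lambda>u. c (\<psi> u)"], rule ext)
      fix v show "z v = (if v \<in> V then \<Sum>u\<in>V. c (\<psi> u) * M u v else 0)"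
      proof (cases "v \<in> V")
        case True
        have "z v = T z (\<psi> v)" unfolding T_def using \<psi>[OF True] by simp
        also have "\<dots> = (\<Sum>i<n. c i * M (\<phi> i) v)" unfolding c A_def using \<psi>[OF True] by simp
        also have "\<dots> = (\<Sum>u\<in>V. c (\<psi> u) * M u v)" unfolding sumre using \<phi> by simp
        finally show ?thesis using True by simp
      next
        case False then show ?thesis using z unfolding ZVg_def by auto
      qed
    qed
  qed
  define f where "f x = reln n A `` {T x}" for x
  have "card (ZVg V // {(x, y). x \<in> ZVg V \<and> y \<in> ZVg V \<and> x - y \<in> latV V M}) = card (f ` ZVg V)"
  proof (rule card_quotient_fun)
    fix x y
    show "((x, y) \<in> {(x, y). x \<in> ZVg V \<and> y \<in> ZVg V \<and> x - y \<in> latV V M}) =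
          (x \<in> ZVg V \<and> y \<in> ZVg V \<and> f x = f y)"
    proof (cases "x \<in> ZVg V \<and> y \<in> ZVg V")
      case True
      then have xy: "x - y \<in> ZVg V" unfolding ZVg_def by (auto simp: fun_diff_def)
      have "f x = f y \<longleftrightarrow> (T x, T y) \<in> reln n A" unfolding f_def
        by (rule eq_equiv_class_iff[OF equiv_reln]) (use TZ in auto)
      also have "\<dots> \<longleftrightarrow> T (x - y) \<in> latn n A" unfolding reln_def Tdiff using TZ by auto
      also have "\<dots> \<longleftrightarrow> x - y \<in> latV V M" using lat[OF xy] by simp
      finally show ?thesis using True by auto
    qed auto
  qed simp
  also have "f ` ZVg V = Zn n // reln n A"
  proof
    show "f ` ZVg V \<subseteq> Zn n // reln n A" unfolding f_def using TZ by (auto intro: quotientI)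
    show "Zn n // reln n A \<subseteq> f ` ZVg V"
    proof
      fix X assume "X \<in> Zn n // reln n A"
      then obtain y where y: "y \<in> Zn n" "X = reln n A `` {y}" by (auto elim: quotientE)
      define x where "x = (\<lambda>v. if v \<in> V then y (\<psi> v) else 0)"
      have "x \<in> ZVg V" unfolding x_def ZVg_def by auto
      moreover have "T x = y"
      proof (rule ext)
        fix j show "T x j = y j" using y(1) \<phi> unfolding T_def x_def Zn_def by auto
      qed
      ultimately show "X \<in> f ` ZVg V" unfolding f_def using y(2) by auto
    qed
  qed
  finally show ?thesis unfolding A_def .
qed

locale tsetup =
  fixes d h :: nat
  assumes d3: "d \<ge> 3"
begin

abbreviation "V \<equiv> tree_vertices d h"

lemma V_mem: "xs \<in> V \<longleftrightarrow> length xs \<le> h \<and> (\<forall>i<length xs. if i = 0 then xs ! i < d else xs ! i < d - 1)"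
  unfolding tree_vertices_def by simp

lemma finite_V: "finite V"
proof (rule finite_subset)
  show "V \<subseteq> {xs. set xs \<subseteq> {..<d} \<and> length xs \<le> h}"
  proof
    fix xs assume "xs \<in> V"
    then have "length xs \<le> h" "\<forall>i<length xs. xs ! i < d" unfolding V_mem by (auto split: if_splits)
    then show "xs \<in> {xs. set xs \<subseteq> {..<d} \<and> length xs \<le> h}" by (auto simp: in_set_conv_nth)
  qed
  show "finite {xs. set xs \<subseteq> {..<d} \<and> length xs \<le> h}" by (rule finite_lists_length_le) simp
qed

lemma nil_V: "[] \<in> V" unfolding V_mem by simp

lemma snoc_V: assumes "v @ [c] \<in> V" shows "v \<in> V"
proof -
  have l: "length v \<le> h" and H: "\<And>i. i < length (v @ [c]) \<Longrightarrow> (if i = 0 then (v@[c]) ! i < d else (v@[c]) ! i < d - 1)"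
    using assms unfolding V_mem by auto
  have "(if i = 0 then v ! i < d else v ! i < d - 1)" if i: "i < length v" for i
  proof -
    have "(v@[c]) ! i = v ! i" using i by (simp add: nth_append)
    have "i < length (v @ [c])" using i by simp
    from H[OF this] show ?thesis unfolding \<open>(v@[c]) ! i = v ! i\<close> .
  qed
  then show ?thesis using l unfolding V_mem by blast
qed

lemma snoc_V_iff: assumes v: "v \<in> V" and l: "length v < h"
  shows "v @ [c] \<in> V \<longleftrightarrow> c < (if v = [] then d else d - 1)"
proof -
  have "v @ [c] \<in> V \<longleftrightarrow> (\<forall>i<Suc (length v). if i = 0 then (v@[c]) ! i < d else (v@[c]) ! i < d - 1)"
    using l unfolding V_mem by simp
  also have "\<dots> \<longleftrightarrow> (if length v = 0 then c < d else c < d - 1)"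
    using v unfolding V_mem by (auto simp: nth_append less_Suc_eq)
  finally show ?thesis by simp
qed

definition "sl = sorted_list_of_set V"
definition "NN = card V"
definition "\<phi> i = sl ! i"

lemma sl: "distinct sl" "set sl = V" "length sl = NN" "sorted_wrt (<) sl"
  unfolding sl_def NN_def using finite_V by (auto simp: sorted_list_of_set.distinct_sorted_key_list_of_set
    sorted_list_of_set.length_sorted_key_list_of_set strict_sorted_list_of_set)

lemma bij_phi: "bij_betw \<phi> {..<NN} V"
  unfolding \<phi>_def[abs_def] by (rule bij_betw_nth) (use sl in auto)

lemma phi_mono: assumes "i < NN" "j < NN" "\<phi> i < \<phi> j" shows "i < j"
proof (rule ccontr)
  assume "\<not> i < j"
  then consider "i = j" | "j < i" by linarith
  then show False
  proof cases
    case 1 then show ?thesis using assms by simp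
  next
    case 2
    then have "\<phi> j < \<phi> i" unfolding \<phi>_def using sorted_wrt_nth_less[OF sl(4) 2] assms sl by simp
    then show ?thesis using assms(3) by simp
  qed
qed

definition "Amat = mat NN NN (\<lambda>(i,j). tree_Delta d (\<phi> i) (\<phi> j))"

lemma sandpile_eq: "sandpile_group d h = ZVg V // {(x, y). x \<in> ZVg V \<and> y \<in> ZVg V \<and> x - y \<in> latV V (tree_Delta d)}"
  unfolding sandpile_group_def ZV_def tree_lattice_def ZVg_def latV_def by simp

lemma card_sandpile: assumes "det Amat \<noteq> 0" shows "card (sandpile_group d h) = nat \<bar>det Amat\<bar>"
  unfolding sandpile_eq transfer_card[OF bij_phi] Amat_def[symmetric]
  by (rule lattice_index[OF _ assms]) (simp add: Amat_def)

end

primrec qq :: "real \<Rightarrow> nat \<Rightarrow> real" where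
  "qq b 0 = 1" | "qq b (Suc m) = b * qq b m + 1"

context tsetup begin

definition "bb = real d - 1"
definition "q m = qq bb m" for m
definition "\<alpha> k = (if k = 0 then real d * bb ^ h / q h else q (h - k + 1) / q (h - k))" for k :: nat

lemma bb: "bb \<ge> 2" using d3 unfolding bb_def by simp

lemma q_pos: "q m \<ge> 1"
proof (induction m)
  case (Suc m) then show ?case using bb unfolding q_def by simp
qed (simp add: q_def)

lemma q0: "q 0 = 1" unfolding q_def by simp

lemma q_rec: "q (m + 2) + bb * q m = (bb + 1) * q (m + 1)"
  unfolding q_def by (simp add: algebra_simps)

lemma q_rec2: "bb ^ (m + 1) + q m = q (m + 1)"
proof (induction m)
  case 0 then show ?case unfolding q_def by simp
next
  case (Suc m)
  have "bb ^ (Suc m + 1) + q (Suc m) = bb * (bb ^ (m + 1) + q m) + 1" unfolding q_def by (simp add: algebra_simps)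
  also have "\<dots> = q (Suc m + 1)" using Suc unfolding q_def by simp
  finally show ?case .
qed

lemma q_closed: "q m * (bb - 1) = bb ^ (m + 1) - 1"
proof (induction m)
  case 0 then show ?case unfolding q_def by simp
next
  case (Suc m)
  have "q (Suc m) * (bb - 1) = bb * (q m * (bb - 1)) + bb - 1" unfolding q_def by (simp add: algebra_simps)
  also have "\<dots> = bb * (bb ^ (m + 1) - 1) + bb - 1" using Suc by simp
  also have "\<dots> = bb ^ (Suc m + 1) - 1" by (simp add: algebra_simps)
  finally show ?case .
qed

lemma alpha_pos: "\<alpha> k > 0"
  unfolding \<alpha>_def using q_pos bb d3 by (auto intro!: divide_pos_pos mult_pos_pos) (smt (verit) q_pos)+

lemma alpha_rec_h: "h \<ge> 1 \<Longrightarrow> \<alpha> h = real d"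
  unfolding \<alpha>_def using q0 bb unfolding q_def bb_def by (simp add: field_simps power2_eq_square)

lemma alpha_rec_mid: assumes "1 \<le> k" "k < h" shows "\<alpha> k + (real d - 1) / \<alpha> (k + 1) = real d"
proof -
  obtain m where m: "h - k = m + 1" using assms by (metis Suc_eq_plus1 less_imp_Suc_add add_diff_cancel_left' diff_Suc_1 Suc_diff_Suc)
  have e1: "h - k + 1 = m + 2" and e2: "h - (k + 1) + 1 = m + 1" and e3: "h - (k+1) = m" using m assms by auto
  have "\<alpha> k + (real d - 1) / \<alpha> (k + 1) = q (m+2) / q (m+1) + bb * q m / q (m+1)"
    unfolding \<alpha>_def e1 e2 e3 m using assms bb_def by simp
  also have "\<dots> = (bb + 1)" using q_rec[of m] q_pos[of "m+1"] by (simp add: field_simps)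
  finally show ?thesis unfolding bb_def by simp
qed

lemma alpha_rec_0: assumes "h \<ge> 1" shows "\<alpha> 0 + real d / \<alpha> 1 = real d"
proof -
  obtain m where m: "h = m + 1" using assms by (intro that[of "h - 1"]) simp
  have a0: "\<alpha> 0 = real d * bb ^ h / q h" unfolding \<alpha>_def by simp
  have a1: "\<alpha> 1 = q h / q m" unfolding \<alpha>_def using m by simp
  have "\<alpha> 0 + real d / \<alpha> 1 = real d * bb ^ h / q h + real d * q m / q h"
    unfolding a0 a1 by simp
  also have "\<dots> = real d * (bb ^ (m+1) + q m) / q h" using m by (simp add: add_divide_distrib algebra_simps)
  also have "\<dots> = real d" using q_rec2[of m] m q_pos[of "m+1"] by simp
  finally show ?thesis .
qed

lemma alpha_h0: "h = 0 \<Longrightarrow> \<alpha> 0 = real d" unfolding \<alpha>_def using q0 by simp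

definition "chl v = {x \<in> V. \<exists>c. x = v @ [c]}"

lemma chl_eq: assumes v: "v \<in> V" and l: "length v < h"
  shows "chl v = (\<lambda>c. v @ [c]) ` {..<(if v = [] then d else d - 1)}"
proof (intro subset_antisym subsetI)
  fix x assume "x \<in> chl v"
  then obtain c where c: "x = v @ [c]" "v @ [c] \<in> V" unfolding chl_def by auto
  then have "c < (if v = [] then d else d - 1)" using snoc_V_iff[OF v l] by blast
  then show "x \<in> (\<lambda>c. v @ [c]) ` {..<(if v = [] then d else d - 1)}" using c(1) by blast
next
  fix x assume "x \<in> (\<lambda>c. v @ [c]) ` {..<(if v = [] then d else d - 1)}"
  then obtain c where c: "x = v @ [c]" "c < (if v = [] then d else d - 1)" by blast
  then have "v @ [c] \<in> V" using snoc_V_iff[OF v l] by blast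
  then show "x \<in> chl v" unfolding chl_def using c(1) by blast
qed

lemma chl_empty: assumes "v \<in> V" "length v = h" shows "chl v = {}"
  unfolding chl_def using assms unfolding V_mem by auto

lemma finite_chl: "finite (chl v)" unfolding chl_def using finite_V by simp

lemma alpha_rec: assumes v: "v \<in> V"
  shows "\<alpha> (length v) + (\<Sum>x\<in>chl v. 1 / \<alpha> (length x)) = real d"
proof (cases "length v < h")
  case True
  define B where "B = (if v = [] then d else d - 1)"
  have "(\<Sum>x\<in>chl v. 1 / \<alpha> (length x)) = (\<Sum>c<B. 1 / \<alpha> (length (v @ [c])))"
    unfolding chl_eq[OF v True] B_def[symmetric] by (subst sum.reindex) (auto simp: inj_on_def)
  also have "\<dots> = real B / \<alpha> (length v + 1)" by simp
  finally have s: "(\<Sum>x\<in>chl v. 1 / \<alpha> (length x)) = real B / \<alpha> (length v + 1)" .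
  show ?thesis
  proof (cases "v = []")
    case True
    then show ?thesis using s alpha_rec_0 \<open>length v < h\<close> unfolding B_def by simp
  next
    case False
    then have "1 \<le> length v" by (cases v) auto
    then show ?thesis using s alpha_rec_mid[of "length v"] \<open>length v < h\<close> False d3 unfolding B_def
      by (simp add: of_nat_diff)
  qed
next
  case False
  then have lv: "length v = h" using v unfolding V_mem by simp
  show ?thesis
  proof (cases "h = 0")
    case True then show ?thesis using lv chl_empty[OF v lv] alpha_h0 by simp
  next
    case False then show ?thesis using lv chl_empty[OF v lv] alpha_rec_h by simp
  qed
qed

definition "Uf x y = (if x = y then 1 else if (\<exists>c. x = y @ [c]) then - 1 / \<alpha> (length x) else (0::real))"

lemma snoc_inj: "v @ [c] = w @ [c'] \<Longrightarrow> v = w"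
  by (metis butlast_snoc)

lemma LDL_entry: assumes v: "v \<in> V" and w: "w \<in> V"
  shows "(\<Sum>x\<in>V. Uf x v * \<alpha> (length x) * Uf x w) = real_of_int (tree_Delta d v w)"
proof -
  define t where "t x = Uf x v * \<alpha> (length x) * Uf x w" for x
  have vch: "v \<notin> chl v" unfolding chl_def by auto
  have "(\<Sum>x\<in>V. t x) = (\<Sum>x\<in>insert v (chl v). t x)"
  proof (rule sum.mono_neutral_right)
    show "finite V" by (rule finite_V)
    show "insert v (chl v) \<subseteq> V" using v unfolding chl_def by auto
    show "\<forall>x\<in>V - insert v (chl v). t x = 0" unfolding t_def Uf_def chl_def by auto
  qed
  also have "\<dots> = t v + (\<Sum>x\<in>chl v. t x)" using vch finite_chl by simp
  also have "(\<Sum>x\<in>chl v. t x) = (\<Sum>x\<in>chl v. - Uf x w)"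
  proof (rule sum.cong)
    fix x assume "x \<in> chl v"
    then obtain c where "x = v @ [c]" unfolding chl_def by auto
    then show "t x = - Uf x w" unfolding t_def Uf_def using alpha_pos[of "length x"] by auto
  qed simp
  finally have S1: "(\<Sum>x\<in>V. t x) = t v + (\<Sum>x\<in>chl v. - Uf x w)" .
  have S: "(\<Sum>x\<in>V. Uf x v * \<alpha> (length x) * Uf x w) = t v + (\<Sum>x\<in>chl v. - Uf x w)"
    using S1 unfolding t_def .
  consider (eq) "w = v" | (child) "w \<in> chl v" | (parent) c where "v = w @ [c]"
    | (other) "w \<noteq> v" "w \<notin> chl v" "\<forall>c. v \<noteq> w @ [c]" by blast
  then show ?thesis
  proof cases
    case eq
    have "(\<Sum>x\<in>chl v. - Uf x w) = (\<Sum>x\<in>chl v. 1 / \<alpha> (length x))"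
      by (rule sum.cong) (auto simp: Uf_def chl_def eq)
    moreover have u: "Uf v v = 1" unfolding Uf_def by simp
    have "t v = \<alpha> (length v)" unfolding t_def eq u by simp
    moreover have "\<not> tree_adj v v" unfolding tree_adj_def by auto
    ultimately show ?thesis using S alpha_rec[OF v] unfolding tree_Delta_def eq by simp
  next
    case child
    then obtain c where c: "w = v @ [c]" unfolding chl_def by auto
    have "(\<Sum>x\<in>chl v. - Uf x w) = (\<Sum>x\<in>chl v. if x = w then -1 else 0)"
    proof (rule sum.cong)
      fix x assume "x \<in> chl v"
      then obtain c' where "x = v @ [c']" unfolding chl_def by auto
      then show "- Uf x w = (if x = w then -1 else 0)" unfolding Uf_def c by auto
    qed simp
    also have "\<dots> = -1" using child finite_chl by simp
    finally have "(\<Sum>x\<in>chl v. - Uf x w) = -1" .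
    moreover have "t v = 0" unfolding t_def Uf_def c by auto
    moreover have "tree_adj v w" "v \<noteq> w" unfolding tree_adj_def c by auto
    ultimately show ?thesis using S unfolding tree_Delta_def by simp
  next
    case parent
    have "(\<Sum>x\<in>chl v. - Uf x w) = 0"
    proof (rule sum.neutral, rule ballI)
      fix x assume "x \<in> chl v"
      then obtain c' where "x = v @ [c']" unfolding chl_def by auto
      then show "- Uf x w = 0" unfolding Uf_def parent by auto
    qed
    moreover have "t v = -1" unfolding t_def Uf_def parent using alpha_pos[of "Suc (length w)"] by auto
    moreover have "tree_adj v w" "v \<noteq> w" unfolding tree_adj_def parent by auto
    ultimately show ?thesis using S unfolding tree_Delta_def by simp
  next
    case other
    have "(\<Sum>x\<in>chl v. - Uf x w) = 0"
    proof (rule sum.neutral, rule ballI)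
      fix x assume x: "x \<in> chl v"
      then obtain c' where c': "x = v @ [c']" unfolding chl_def by auto
      have "x \<noteq> w" using x other by auto
      moreover have "\<not> (\<exists>c. x = w @ [c])" using c' other(1) snoc_inj by metis
      ultimately show "- Uf x w = 0" unfolding Uf_def by auto
    qed
    moreover have "t v = 0" unfolding t_def Uf_def using other by auto
    moreover have "\<not> tree_adj v w" unfolding tree_adj_def using other w unfolding chl_def by auto
    ultimately show ?thesis using S other unfolding tree_Delta_def by simp
  qed
qed

end

lemma snoc_less: "(xs :: nat list) < xs @ [c]"
  unfolding list_less_def lexord_def by blast

lemma mult_entry: assumes "A \<in> carrier_mat n n" "B \<in> carrier_mat n n" "i < n" "j < n"
  shows "(A * B) $$ (i,j) = (\<Sum>k<n. A $$ (i,k) * B $$ (k,j))"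
  using assms by (simp add: scalar_prod_def atLeast0LessThan)

context tsetup begin

definition "Umat = mat NN NN (\<lambda>(i,j). Uf (\<phi> i) (\<phi> j))"
definition "Dmat = mat NN NN (\<lambda>(i,j). if i = j then \<alpha> (length (\<phi> i)) else 0)"

lemma phi_V: "i < NN \<Longrightarrow> \<phi> i \<in> V" using bij_phi by (meson bij_betwE lessThan_iff)

lemma sum_reidx: "(\<Sum>x\<in>V. g x) = (\<Sum>i<NN. g (\<phi> i))" for g :: "nat list \<Rightarrow> real"
  using sum.reindex_bij_betw[OF bij_phi, of g] by simp

lemma prod_reidx: "(\<Prod>x\<in>V. g x) = (\<Prod>i<NN. g (\<phi> i))" for g :: "nat list \<Rightarrow> real"
  using prod.reindex_bij_betw[OF bij_phi, of g] by simp

lemma LDL: "map_mat real_of_int Amat = transpose_mat Umat * (Dmat * Umat)"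
proof (rule eq_matI)
  have U: "Umat \<in> carrier_mat NN NN" and D: "Dmat \<in> carrier_mat NN NN" and Ut: "transpose_mat Umat \<in> carrier_mat NN NN"
    unfolding Umat_def Dmat_def by auto
  have DU: "Dmat * Umat \<in> carrier_mat NN NN" using D U by auto
  fix i j assume i: "i < dim_row (transpose_mat Umat * (Dmat * Umat))" and j: "j < dim_col (transpose_mat Umat * (Dmat * Umat))"
  then have i: "i < NN" and j: "j < NN" using Ut DU by auto
  have DUe: "(Dmat * Umat) $$ (l,j) = \<alpha> (length (\<phi> l)) * Uf (\<phi> l) (\<phi> j)" if l: "l < NN" for l
  proof -
    have "(Dmat * Umat) $$ (l,j) = (\<Sum>k<NN. Dmat $$ (l,k) * Umat $$ (k,j))" by (rule mult_entry[OF D U l j])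
    also have "\<dots> = (\<Sum>k<NN. if k = l then \<alpha> (length (\<phi> l)) * Uf (\<phi> l) (\<phi> j) else 0)"
      by (rule sum.cong) (use l j in \<open>auto simp: Dmat_def Umat_def\<close>)
    also have "\<dots> = \<alpha> (length (\<phi> l)) * Uf (\<phi> l) (\<phi> j)" using l by (subst sum.delta) auto
    finally show ?thesis .
  qed
  have "(transpose_mat Umat * (Dmat * Umat)) $$ (i,j) = (\<Sum>l<NN. transpose_mat Umat $$ (i,l) * (Dmat * Umat) $$ (l,j))"
    by (rule mult_entry[OF Ut DU i j])
  also have "\<dots> = (\<Sum>l<NN. Uf (\<phi> l) (\<phi> i) * \<alpha> (length (\<phi> l)) * Uf (\<phi> l) (\<phi> j))"
    by (rule sum.cong) (use i j DUe in \<open>auto simp: Umat_def\<close>)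
  also have "\<dots> = (\<Sum>x\<in>V. Uf x (\<phi> i) * \<alpha> (length x) * Uf x (\<phi> j))" by (rule sum_reidx[symmetric])
  also have "\<dots> = real_of_int (tree_Delta d (\<phi> i) (\<phi> j))" by (rule LDL_entry[OF phi_V[OF i] phi_V[OF j]])
  finally show "map_mat real_of_int Amat $$ (i, j) = (transpose_mat Umat * (Dmat * Umat)) $$ (i, j)"
    using i j by (simp add: Amat_def)
next
  show "dim_row (map_mat real_of_int Amat) = dim_row (transpose_mat Umat * (Dmat * Umat))"
    by (simp add: Amat_def Umat_def)
  show "dim_col (map_mat real_of_int Amat) = dim_col (transpose_mat Umat * (Dmat * Umat))"
    by (simp add: Amat_def Umat_def)
qed

lemma det_U: "det Umat = 1"
proof -
  have U: "Umat \<in> carrier_mat NN NN" unfolding Umat_def by auto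
  have "det Umat = prod_list (diag_mat Umat)"
  proof (rule det_lower_triangular[OF _ U])
    fix i j assume ij: "i < j" "j < NN"
    have ne: "\<phi> i \<noteq> \<phi> j" using ij bij_phi unfolding bij_betw_def inj_on_def by auto
    have "\<not> (\<exists>c. \<phi> i = \<phi> j @ [c])"
    proof
      assume "\<exists>c. \<phi> i = \<phi> j @ [c]"
      then obtain c where "\<phi> i = \<phi> j @ [c]" by auto
      then have "\<phi> j < \<phi> i" using snoc_less by simp
      then have "j < i" using phi_mono ij by auto
      then show False using ij by simp
    qed
    then show "Umat $$ (i,j) = 0" using ij ne unfolding Umat_def Uf_def by auto
  qed
  also have "diag_mat Umat = map (\<lambda>_. 1) [0..<NN]" unfolding diag_mat_def Umat_def by (auto simp: Uf_def)
  also have "prod_list (map (\<lambda>_. (1::real)) xs) = 1" for xs by (induction xs) auto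
  finally show ?thesis .
qed

lemma det_D: "det Dmat = (\<Prod>v\<in>V. \<alpha> (length v))"
proof -
  have D: "Dmat \<in> carrier_mat NN NN" unfolding Dmat_def by auto
  have ut: "upper_triangular Dmat" unfolding upper_triangular_def Dmat_def by auto
  have "det Dmat = prod_list (diag_mat Dmat)" by (rule det_upper_triangular[OF ut D])
  also have "\<dots> = (\<Prod>i<NN. \<alpha> (length (\<phi> i)))" using D
    by (simp add: diag_mat_def Dmat_def prod.distinct_set_conv_list[symmetric] atLeast0LessThan)
  also have "\<dots> = (\<Prod>v\<in>V. \<alpha> (length v))" by (rule prod_reidx[symmetric])
  finally show ?thesis .
qed

lemma det_A: "real_of_int (det Amat) = (\<Prod>v\<in>V. \<alpha> (length v))"
proof -
  have U: "Umat \<in> carrier_mat NN NN" and D: "Dmat \<in> carrier_mat NN NN"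
    unfolding Umat_def Dmat_def by auto
  have "real_of_int (det Amat) = det (map_mat real_of_int Amat)" by simp
  also have "\<dots> = det (transpose_mat Umat) * (det Dmat * det Umat)"
    unfolding LDL using U D by (simp add: det_mult[of _ NN])
  also have "\<dots> = (\<Prod>v\<in>V. \<alpha> (length v))" using det_transpose[OF U] det_U det_D by simp
  finally show ?thesis .
qed

lemma card_G: "real (card (sandpile_group d h)) = (\<Prod>v\<in>V. \<alpha> (length v))"
proof -
  have pos: "(\<Prod>v\<in>V. \<alpha> (length v)) > 0" using alpha_pos by (simp add: prod_pos)
  then have "det Amat \<noteq> 0" using det_A by auto
  then have "card (sandpile_group d h) = nat \<bar>det Amat\<bar>" by (rule card_sandpile)
  then have "real (card (sandpile_group d h)) = \<bar>real_of_int (det Amat)\<bar>" by simp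
  then show ?thesis using det_A pos by simp
qed

end

definition "bD d = real d - 1"
definition "LD d m = log (bD d) (qq (bD d) m)"
definition "pt d n = LD d (n + 1) / bD d ^ (n + 2)"
definition "PS d N = (\<Sum>n<N. pt d n)"

context tsetup begin

lemma bb_bD: "bb = bD d" unfolding bb_def bD_def ..
lemma L_def': "LD d m = log bb (q m)" unfolding LD_def q_def bb_bD ..

definition "lvl k = {v \<in> V. length v = k}"

lemma lvl0: "lvl 0 = {[]}" unfolding lvl_def using nil_V by auto

lemma lvl_Suc: assumes "Suc m \<le> h"
  shows "lvl (Suc m) = (\<lambda>(c,ys). c # ys) ` ({..<d} \<times> {ys. set ys \<subseteq> {..<d-1} \<and> length ys = m})"
proof (intro subset_antisym subsetI)
  fix xs assume "xs \<in> lvl (Suc m)"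
  then have xs: "length xs = Suc m" "\<forall>i<Suc m. if i = 0 then xs ! i < d else xs ! i < d - 1"
    unfolding lvl_def V_mem by auto
  then obtain c ys where cys: "xs = c # ys" by (cases xs) auto
  have "c < d" using xs(2)[rule_format, of 0] cys by simp
  moreover have "length ys = m" using xs(1) cys by simp
  moreover have "set ys \<subseteq> {..<d-1}"
  proof
    fix y assume "y \<in> set ys"
    then obtain j where j: "j < length ys" "ys ! j = y" by (auto simp: in_set_conv_nth)
    then have "Suc j < Suc m" using \<open>length ys = m\<close> by simp
    then show "y \<in> {..<d-1}" using xs(2)[rule_format, of "Suc j"] cys j by simp
  qed
  ultimately show "xs \<in> (\<lambda>(c,ys). c # ys) ` ({..<d} \<times> {ys. set ys \<subseteq> {..<d-1} \<and> length ys = m})"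
    using cys by auto
next
  fix xs assume "xs \<in> (\<lambda>(c,ys). c # ys) ` ({..<d} \<times> {ys. set ys \<subseteq> {..<d-1} \<and> length ys = m})"
  then obtain c ys where cys: "xs = c # ys" "c < d" "set ys \<subseteq> {..<d-1}" "length ys = m" by auto
  have "\<forall>i<Suc m. if i = 0 then xs ! i < d else xs ! i < d - 1"
  proof (intro allI impI)
    fix i assume i: "i < Suc m"
    show "if i = 0 then xs ! i < d else xs ! i < d - 1"
    proof (cases i)
      case 0 then show ?thesis using cys by simp
    next
      case (Suc j)
      then have "ys ! j \<in> set ys" using i cys by simp
      then show ?thesis using Suc cys by auto
    qed
  qed
  moreover have "length xs = Suc m" using cys by simp
  ultimately show "xs \<in> lvl (Suc m)" unfolding lvl_def V_mem using assms by simp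
qed

lemma card_lvl_Suc: assumes "Suc m \<le> h" shows "card (lvl (Suc m)) = d * (d - 1) ^ m"
proof -
  have "inj_on (\<lambda>(c,ys). c # ys) ({..<d} \<times> {ys. set ys \<subseteq> {..<d-1} \<and> length ys = m})"
    by (auto simp: inj_on_def)
  then have "card (lvl (Suc m)) = card ({..<d} \<times> {ys. set ys \<subseteq> {..<d-1} \<and> length ys = m})"
    unfolding lvl_Suc[OF assms] by (rule card_image)
  also have "\<dots> = d * (d - 1) ^ m" by (simp add: card_cartesian_product card_lists_length_eq)
  finally show ?thesis .
qed

lemma log_prod_alpha: "log bb (\<Prod>v\<in>V. \<alpha> (length v)) = (\<Sum>v\<in>V. log bb (\<alpha> (length v)))"
proof -
  have "ln (\<Prod>v\<in>V. \<alpha> (length v)) = (\<Sum>v\<in>V. ln (\<alpha> (length v)))"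
    by (rule ln_prod[OF finite_V]) (use alpha_pos in \<open>auto simp: less_le\<close>)
  then show ?thesis unfolding log_def by (simp add: sum_divide_distrib)
qed

lemma sum_levels: "(\<Sum>v\<in>V. g (length v)) = g 0 + (\<Sum>k<h. real (d * (d - 1) ^ k) * g (Suc k))"
  for g :: "nat \<Rightarrow> real"
proof -
  have "(\<Sum>v\<in>V. g (length v)) = (\<Sum>k\<in>{..h}. (\<Sum>v\<in>{v \<in> V. length v = k}. g (length v)))"
    by (rule sum.group[symmetric]) (use finite_V V_mem in auto)
  also have "\<dots> = (\<Sum>k\<in>{..h}. real (card (lvl k)) * g k)"
    by (rule sum.cong) (auto simp: lvl_def)
  also have "\<dots> = real (card (lvl 0)) * g 0 + (\<Sum>k<h. real (card (lvl (Suc k))) * g (Suc k))"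
    by (simp add: sum.atMost_shift)
  also have "\<dots> = g 0 + (\<Sum>k<h. real (d * (d - 1) ^ k) * g (Suc k))"
    using card_lvl_Suc by (simp add: lvl0)
  finally show ?thesis .
qed

lemma bb_gt1: "bb > 1" using bb by simp

lemma qp: "q m > 0" using q_pos[of m] by simp

lemma log_alpha0: "log bb (\<alpha> 0) = log bb (real d) + real h - LD d h"
proof -
  have "real d * bb ^ h > 0" using bb d3 by simp
  then have "log bb (\<alpha> 0) = log bb (real d * bb ^ h) - log bb (q h)"
    unfolding \<alpha>_def using qp by (simp add: log_divide_pos)
  also have "log bb (real d * bb ^ h) = log bb (real d) + real h"
    using bb d3 by (simp add: log_mult log_nat_power)
  finally show ?thesis unfolding L_def' by simp
qed

lemma log_alphaS: "k < h \<Longrightarrow> log bb (\<alpha> (Suc k)) = LD d (h - k) - LD d (h - Suc k)"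
  unfolding \<alpha>_def L_def' using qp by (simp add: log_divide_pos Suc_diff_Suc)

lemma log_G: "log bb (real (card (sandpile_group d h))) =
   log bb (real d) + real h - LD d h + bb ^ h * real d * (bb * PS d h - PS d (h - 1))"
proof -
  have "log bb (real (card (sandpile_group d h))) = (\<Sum>v\<in>V. log bb (\<alpha> (length v)))"
    unfolding card_G log_prod_alpha ..
  also have "\<dots> = log bb (\<alpha> 0) + (\<Sum>k<h. real (d * (d - 1) ^ k) * log bb (\<alpha> (Suc k)))"
    by (rule sum_levels)
  also have "(\<Sum>k<h. real (d * (d - 1) ^ k) * log bb (\<alpha> (Suc k)))
     = (\<Sum>k<h. real d * bb ^ k * (LD d (h - k) - LD d (h - Suc k)))"
  proof (rule sum.cong)
    fix k assume k: "k \<in> {..<h}"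
    have "real (d * (d - 1) ^ k) = real d * bb ^ k" using d3 by (simp add: bb_def of_nat_diff)
    then show "real (d * (d - 1) ^ k) * log bb (\<alpha> (Suc k)) = real d * bb ^ k * (LD d (h - k) - LD d (h - Suc k))"
      using k log_alphaS[of k] by simp
  qed simp
  also have "\<dots> = (\<Sum>m<h. real d * bb ^ (h - Suc m) * (LD d (Suc m) - LD d m))"
    by (rule sum.nat_diff_reindex[symmetric, where g = "\<lambda>k. real d * bb ^ k * (LD d (h - k) - LD d (h - Suc k))", THEN trans])
      (rule sum.cong, auto simp: Suc_diff_Suc)
  also have "\<dots> = bb ^ h * real d * (\<Sum>m<h. (LD d (Suc m) - LD d m) / bb ^ Suc m)"
  proof -
    have e: "bb ^ (h - Suc m) = bb ^ h / bb ^ Suc m" if "m < h" for m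
      using that bb_gt1 by (simp add: power_diff)
    show ?thesis unfolding sum_distrib_left
    proof (rule sum.cong)
      fix m assume "m \<in> {..<h}"
      then show "real d * bb ^ (h - Suc m) * (LD d (Suc m) - LD d m) = bb ^ h * real d * ((LD d (Suc m) - LD d m) / bb ^ Suc m)"
        using e[of m] by simp
    qed simp
  qed
  also have "(\<Sum>m<h. (LD d (Suc m) - LD d m) / bb ^ Suc m) = bb * PS d h - PS d (h - 1)"
  proof (induction h)
    case 0 then show ?case by (simp add: PS_def)
  next
    case (Suc n)
    have L0: "LD d 0 = 0" unfolding L_def' q0 by simp
    have "PS d n - PS d (n - 1) = LD d n / bb ^ Suc n"
    proof (cases n)
      case 0 then show ?thesis by (simp add: PS_def L0)
    next
      case (Suc k) then show ?thesis by (simp add: PS_def pt_def bb_bD)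
    qed
    moreover have "PS d (Suc n) = PS d n + LD d (Suc n) / bb ^ (n + 2)"
      by (simp add: PS_def pt_def bb_bD)
    ultimately have "bb * PS d (Suc n) - PS d (Suc n - 1) = (bb * PS d n - PS d (n - 1)) + (LD d (Suc n) - LD d n) / bb ^ Suc n"
      using bb_gt1 by (simp add: field_simps)
    then show ?case using Suc by simp
  qed
  finally show ?thesis unfolding log_alpha0 by simp
qed

end

lemma qq_closed: "qq b m * (b - 1) = b ^ (m + 1) - 1"
proof (induction m)
  case 0 then show ?case by simp
next
  case (Suc m)
  have "qq b (Suc m) * (b - 1) = b * (qq b m * (b - 1)) + b - 1" by (simp add: algebra_simps)
  also have "\<dots> = b * (b ^ (m + 1) - 1) + b - 1" using Suc by simp
  also have "\<dots> = b ^ (Suc m + 1) - 1" by (simp add: algebra_simps)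
  finally show ?case .
qed

lemma qq_ge1: "b \<ge> 1 \<Longrightarrow> qq b m \<ge> 1"
proof (induction m)
  case (Suc m) then show ?case by simp
qed simp

lemma pow32: "real n + 2 \<le> (3/2) ^ (n + 2)"
proof (induction n)
  case 0 then show ?case by simp
next
  case (Suc n)
  have "real (Suc n) + 2 \<le> 3/2 * (real n + 2)" by simp
  also have "\<dots> \<le> 3/2 * (3/2) ^ (n + 2)" using Suc by simp
  finally show ?case by simp
qed

locale dfix =
  fixes d :: nat
  assumes d3: "d \<ge> 3"
begin

abbreviation "b \<equiv> bD d"

lemma b2: "b \<ge> 2" using d3 unfolding bD_def by simp

lemma q1: "qq b m \<ge> 1" using qq_ge1 b2 by simp

lemma LD_nonneg: "LD d m \<ge> 0" unfolding LD_def using q1[of m] b2 by simp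

lemma LD_le: "LD d m \<le> real m + 1"
proof -
  have "qq b m * 1 \<le> qq b m * (b - 1)" using q1[of m] b2 by (intro mult_left_mono) auto
  then have "qq b m \<le> b ^ (m + 1)" using qq_closed[of b m] by simp
  then have "LD d m \<le> log b (b ^ (m + 1))" unfolding LD_def using q1[of m] b2
    by (subst log_le_cancel_iff) auto
  also have "\<dots> = real (m + 1) * log b b" by (rule log_nat_power) (use b2 in simp)
  also have "\<dots> = real m + 1" using b2 by simp
  finally show ?thesis .
qed

lemma pt_pos: "pt d n > 0"
proof -
  have "qq b (n + 1) \<ge> b + 1" using q1[of n] b2 by simp
  then have "qq b (n + 1) > 1" using b2 by simp
  then have "LD d (n + 1) > 0" unfolding LD_def using b2 by (subst zero_less_log_cancel_iff) auto
  then show ?thesis unfolding pt_def using b2 by simp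
qed

lemma summable_pt: "summable (pt d)"
proof (rule summable_comparison_test')
  show "summable (\<lambda>n. (9/16) * (3/4 :: real) ^ n)" by (intro summable_mult summable_geometric) simp
  fix n :: nat assume "n \<ge> 0"
  have "pt d n \<le> (real n + 2) / b ^ (n + 2)"
    unfolding pt_def using LD_le[of "n+1"] b2 by (intro divide_right_mono) auto
  also have "\<dots> \<le> (3/2) ^ (n + 2) / b ^ (n + 2)" using pow32[of n] b2 by (intro divide_right_mono) auto
  also have "\<dots> \<le> (3/2) ^ (n + 2) / 2 ^ (n + 2)" using b2 by (intro divide_left_mono power_mono) auto
  also have "\<dots> = ((3/2) / 2) ^ (n + 2)" by (rule power_divide[symmetric])
  also have "\<dots> = (3/4) ^ (n + 2)" by simp
  also have "\<dots> = (9/16) * (3/4) ^ n" by (simp add: power_add)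
  finally show "norm (pt d n) \<le> (9/16) * (3/4) ^ n" using pt_pos[of n] by simp
qed

lemma c_const_eq: "c_const d = real d * (real d - 2) * suminf (pt d)"
proof -
  have "(\<lambda>n. (real d - 1) powr (- 2 - real n) *
           log (real d - 1) (((real d - 1) ^ (n + 2) - 1) / (real d - 2))) = pt d"
  proof (rule ext)
    fix n
    have bd: "real d - 1 = b" unfolding bD_def ..
    have e1: "- 2 - real n = - real (n + 2)" by simp
    have "(real d - 1) powr (- 2 - real n) = b powr (- real (n + 2))" unfolding bd e1 ..
    also have "\<dots> = inverse (b powr real (n + 2))" by (rule powr_minus)
    also have "b powr real (n + 2) = b ^ (n + 2)" using b2 by (intro powr_realpow) simp
    finally have "(real d - 1) powr (- 2 - real n) = 1 / b ^ (n + 2)" by (simp add: divide_inverse)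
    moreover have "((real d - 1) ^ (n + 2) - 1) / (real d - 2) = qq b (n + 1)"
    proof -
      have "real d - 2 = b - 1" unfolding bD_def by simp
      moreover have "b - 1 > 0" using b2 by simp
      ultimately show ?thesis unfolding bd using qq_closed[of b "n+1"] by (simp add: field_simps)
    qed
    ultimately show "(real d - 1) powr (- 2 - real n) *
           log (real d - 1) (((real d - 1) ^ (n + 2) - 1) / (real d - 2)) = pt d n"
      unfolding pt_def LD_def bd by simp
  qed
  then show ?thesis unfolding c_const_def by simp
qed

end

theorem corollary2p6:
  fixes d :: nat
  assumes "d \<ge> 3"
  shows "(\<lambda>h. log (real d - 1) (real (card (sandpile_group d h))))
           \<sim>[at_top] (\<lambda>h. c_const d * (real d - 1) ^ h)"
proof -
  interpret dfix d by unfold_locales (rule assms)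
  have bd: "real d - 1 = b" unfolding bD_def ..
  define S where "S = suminf (pt d)"
  define c where "c = real d * (real d - 2) * S"
  have Spos: "S > 0" unfolding S_def using summable_pt pt_pos by (rule suminf_pos)
  have cpos: "c > 0" unfolding c_def using Spos assms by simp
  have cc: "c_const d = c" unfolding c_def S_def c_const_eq ..
  define N where "N h = log b (real d) + real h - LD d h" for h
  have logG: "log b (real (card (sandpile_group d h))) =
      N h + b ^ h * real d * (b * PS d h - PS d (h - 1))" for h
  proof -
    interpret tsetup d h by unfold_locales (rule assms)
    show ?thesis using log_G unfolding bb_bD N_def .
  qed
  have eq: "log (real d - 1) (real (card (sandpile_group d h))) / (c_const d * (real d - 1) ^ h)
      = N h / (c * b ^ h) + real d * (b * PS d h - PS d (h - 1)) / c" for h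
    unfolding cc bd logG using cpos b2 by (simp add: field_simps)
  have lim1: "(\<lambda>h. N h / (c * b ^ h)) \<longlonglongrightarrow> 0"
  proof (rule Lim_null_comparison)
    define A where "A = \<bar>log b (real d)\<bar>"
    show "\<forall>\<^sub>F h in sequentially. norm (N h / (c * b ^ h)) \<le> (A + real h + 1) / 2 ^ h / c"
    proof (rule always_eventually, rule allI)
      fix h
      have "\<bar>N h\<bar> \<le> A + real h + 1" unfolding N_def A_def using LD_nonneg[of h] LD_le[of h] by linarith
      moreover have "(2::real) ^ h \<le> b ^ h" using b2 by (intro power_mono) auto
      ultimately have "\<bar>N h\<bar> / b ^ h \<le> (A + real h + 1) / 2 ^ h"
        by (intro frac_le) (auto simp: A_def)
      then show "norm (N h / (c * b ^ h)) \<le> (A + real h + 1) / 2 ^ h / c"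
        using cpos b2 by (simp add: abs_mult field_simps)
    qed
    have "(\<lambda>h. (A + real h + 1) / 2 ^ h) \<longlonglongrightarrow> 0" by real_asymp
    then show "(\<lambda>h. (A + real h + 1) / 2 ^ h / c) \<longlonglongrightarrow> 0"
      using tendsto_divide_zero by blast
  qed
  have PS1: "(\<lambda>h. PS d h) \<longlonglongrightarrow> S" unfolding PS_def[abs_def] S_def by (rule summable_LIMSEQ[OF summable_pt])
  have PS2: "(\<lambda>h. PS d (h - 1)) \<longlonglongrightarrow> S"
    by (rule filterlim_compose[OF PS1 filterlim_minus_const_nat_at_top])
  have lim2: "(\<lambda>h. real d * (b * PS d h - PS d (h - 1)) / c) \<longlonglongrightarrow> real d * (b * S - S) / c"
    using cpos by (intro tendsto_intros PS1 PS2) auto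
  have one: "real d * (b * S - S) / c = 1" unfolding c_def bD_def using Spos assms by (simp add: field_simps)
  have "(\<lambda>h. N h / (c * b ^ h) + real d * (b * PS d h - PS d (h - 1)) / c) \<longlonglongrightarrow> 0 + real d * (b * S - S) / c"
    by (rule tendsto_add[OF lim1 lim2])
  then have "(\<lambda>h. N h / (c * b ^ h) + real d * (b * PS d h - PS d (h - 1)) / c) \<longlonglongrightarrow> 1"
    unfolding one by simp
  then show ?thesis by (intro asymp_equivI') (simp add: eq)
qed

end
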